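(* Let $n\ge1$, let $H(\mathbf{q},\mathbf{p})=p^2/2-1/q$ on $\mathbb{R}^n\times\mathbb{R}^n$, and let $P_-=\{(\mathbf{q},\mathbf{p}):\mathbf{q}\neq\mathbf{o},\ H(\mathbf{q},\mathbf{p})<0\}$. On $P_-$ define $L_{ij}=q_ip_j-q_jp_i$ for $i,j=1,\dots,n$, the Lenz vector $\mathbf{K}=(p^2-1/q)\mathbf{q}-(\mathbf{q}\cdot\mathbf{p})\mathbf{p}$, and \[ L_{i(n+1)}=-L_{(n+1)i}=\frac{K_i}{\sqrt{-2H}}\quad(i=1,\dots,n),\qquad L_{(n+1)(n+1)}=0. \] Let $\Phi_{LS}:P_-\to T_-=\{(\mathbf{r},\mathbf{s})\in T^{\ast}S^n: \mathbf{r}\neq(0,\dots,0,1),\ \mathbf{s}\neq0\}$ be the Ligon--Schaaf map $\Phi_{LS}(\mathbf{q},\mathbf{p})=(\mathbf{r},\mathbf{s})$, where \[ \mathbf{r}=(\cos v_{n+1})\mathbf{u}+(\sin v_{n+1})\mathbf{v},\qquad \mathbf{s}=\frac{(-\sin v_{n+1})\mathbf{u}+(\cos v_{n+1})\mathbf{v}}{\sqrt{-2H}}, \] with \[ \mathbf{u}=\big(\sqrt{-2H}\,q\,\mathbf{p},\ qp^2-1\big),\qquad \mathbf{v}=\big(-\mathbf{q}/q+(\mathbf{q}\cdot\mathbf{p})\mathbf{p},\ -\sqrt{-2H}\,(\mathbf{q}\cdot\mathbf{p})\big)\in\mathbb{R}^{n+1}, \] and $v_{n+1}=-\sqrt{-2H}\,(\mathbf{q}\cdot\mathbf{p})$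 the last coordinate of $\mathbf{v}$. For $i,j=1,\dots,n+1$ let $M_{ij}=r_is_j-r_js_i$ be the components of angular momentum $\mathbf{r}\wedge\mathbf{s}$ on $\mathbb{R}^{n+1}\times\mathbb{R}^{n+1}$. Then \[ M_{ij}\circ\Phi_{LS}=L_{ij}\qquad\text{for all } i,j=1,\dots,n+1. \] In particular, on $P_-$ one has $\{L_{ij},L_{jk}\}=L_{ki}$, and $\{L_{ij},L_{kl}\}=0$ whenever $\#\{i,j,k,l\}\neq3$, for $i,j,k,l=1,\dots,n+1$; and $\Phi_{LS}$ intertwines the two infinitesimal Hamiltonian actions of $\mathfrak{so}(n+1)$ (generated by the $L_{ij}$ on $P_-$ and by the $M_{ij}$ on $T_-$).
   Context: Vectors are bold; $\mathbf{a}\cdot\mathbf{b}$ is the Euclidean inner product, $a^2=\mathbf{a}\cdot\mathbf{a}$, $q=|\mathbf{q}|$, and $\mathbf{o}$ is the origin. $T^{\ast}S^n$ is identified with $\{(\mathbf{r},\mathbf{s})\in\mathbb{R}^{n+1}\times\mathbb{R}^{n+1}:\mathbf{r}\cdot\mathbf{r}=1,\ \mathbf{r}\cdot\mathbf{s}=0\}$. The phase space $\mathbb{R}^n\times\mathbb{R}^n$ carries the symplectic form $\sum dq_k\wedge dp_k$ and Poisson bracket $\{f,g\}=\sum_k\big(\frac{\partial f}{\partial q_k}\frac{\partial g}{\partial p_k}-\frac{\partial f}{\partial p_k}\frac{\partial g}{\partial q_k}\big)$; similarly $T^{\ast}S^n$ carries the restriction of $\sum_{k=1}^{n+1}dr_k\wedge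 ds_k$. *)

theory Defs
  imports "HOL-Analysis.Analysis"
begin

text \<open>Vectors in R^m are represented as functions nat => real whose relevant
  coordinates are those with index in {1..m}; all operations below only read
  these coordinates.\<close>

definition dotp :: "nat \<Rightarrow> (nat \<Rightarrow> real) \<Rightarrow> (nat \<Rightarrow> real) \<Rightarrow> real" where
  "dotp m x y = (\<Sum>k=1..m. x k * y k)"

definition vnorm :: "nat \<Rightarrow> (nat \<Rightarrow> real) \<Rightarrow> real" where
  "vnorm m x = sqrt (dotp m x x)"

definition kepH :: "nat \<Rightarrow> (nat \<Rightarrow> real) \<Rightarrow> (nat \<Rightarrow> real) \<Rightarrow> real" where
  "kepH n q p = dotp n p p / 2 - 1 / vnorm n q"

definition Pminus :: "nat \<Rightarrow> ((nat \<Rightarrow> real) \<times> (nat \<Rightarrow> real)) set" where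
  "Pminus n = {(q, p). (\<exists>k\<in>{1..n}. q k \<noteq> 0) \<and> kepH n q p < 0}"

definition lenz :: "nat \<Rightarrow> (nat \<Rightarrow> real) \<Rightarrow> (nat \<Rightarrow> real) \<Rightarrow> nat \<Rightarrow> real" where
  "lenz n q p = (\<lambda>k. (dotp n p p - 1 / vnorm n q) * q k - dotp n q p * p k)"

definition Lfun :: "nat \<Rightarrow> nat \<Rightarrow> nat \<Rightarrow> (nat \<Rightarrow> real) \<Rightarrow> (nat \<Rightarrow> real) \<Rightarrow> real" where
  "Lfun n i j q p =
     (if i \<in> {1..n} \<and> j \<in> {1..n} then q i * p j - q j * p i
      else if i \<in> {1..n} \<and> j = n + 1 then lenz n q p i / sqrt (- 2 * kepH n q p)
      else if i = n + 1 \<and> j \<in> {1..n} then - (lenz n q p j / sqrt (- 2 * kepH n q p))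
      else 0)"

definition LSu :: "nat \<Rightarrow> (nat \<Rightarrow> real) \<Rightarrow> (nat \<Rightarrow> real) \<Rightarrow> nat \<Rightarrow> real" where
  "LSu n q p = (\<lambda>k. if k \<in> {1..n} then sqrt (- 2 * kepH n q p) * vnorm n q * p k
                    else if k = n + 1 then vnorm n q * dotp n p p - 1 else 0)"

definition LSv :: "nat \<Rightarrow> (nat \<Rightarrow> real) \<Rightarrow> (nat \<Rightarrow> real) \<Rightarrow> nat \<Rightarrow> real" where
  "LSv n q p = (\<lambda>k. if k \<in> {1..n} then - q k / vnorm n q + dotp n q p * p k
                    else if k = n + 1 then - sqrt (- 2 * kepH n q p) * dotp n q p else 0)"

definition LSmap :: "nat \<Rightarrow> (nat \<Rightarrow> real) \<Rightarrow> (nat \<Rightarrow> real) \<Rightarrow> (nat \<Rightarrow> real) \<times> (nat \<Rightarrow> real)" where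
  "LSmap n q p =
     (let u = LSu n q p; v = LSv n q p; \<theta> = v (n + 1); w = sqrt (- 2 * kepH n q p) in
      (\<lambda>k. cos \<theta> * u k + sin \<theta> * v k,
       \<lambda>k. (- sin \<theta> * u k + cos \<theta> * v k) / w))"

text \<open>T_- inside T^*S^n, viewed in R^{n+1} x R^{n+1} (coordinates 1..n+1).\<close>
definition Tminus :: "nat \<Rightarrow> ((nat \<Rightarrow> real) \<times> (nat \<Rightarrow> real)) set" where
  "Tminus n = {(r, s). dotp (n + 1) r r = 1 \<and> dotp (n + 1) r s = 0
                \<and> (\<exists>k\<in>{1..n+1}. r k \<noteq> (if k = n + 1 then 1 else 0))
                \<and> (\<exists>k\<in>{1..n+1}. s k \<noteq> 0)}"

definition Mfun :: "nat \<Rightarrow> nat \<Rightarrow> (nat \<Rightarrow> real) \<Rightarrow> (nat \<Rightarrow> real) \<Rightarrow> real" where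
  "Mfun i j r s = r i * s j - r j * s i"

definition pd1 :: "((nat \<Rightarrow> real) \<Rightarrow> (nat \<Rightarrow> real) \<Rightarrow> real) \<Rightarrow> nat \<Rightarrow> (nat \<Rightarrow> real) \<Rightarrow> (nat \<Rightarrow> real) \<Rightarrow> real" where
  "pd1 f k x y = deriv (\<lambda>t. f (x(k := x k + t)) y) 0"

definition pd2 :: "((nat \<Rightarrow> real) \<Rightarrow> (nat \<Rightarrow> real) \<Rightarrow> real) \<Rightarrow> nat \<Rightarrow> (nat \<Rightarrow> real) \<Rightarrow> (nat \<Rightarrow> real) \<Rightarrow> real" where
  "pd2 f k x y = deriv (\<lambda>t. f x (y(k := y k + t))) 0"

definition poisson :: "nat \<Rightarrow> ((nat \<Rightarrow> real) \<Rightarrow> (nat \<Rightarrow> real) \<Rightarrow> real)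
    \<Rightarrow> ((nat \<Rightarrow> real) \<Rightarrow> (nat \<Rightarrow> real) \<Rightarrow> real) \<Rightarrow> (nat \<Rightarrow> real) \<Rightarrow> (nat \<Rightarrow> real) \<Rightarrow> real" where
  "poisson m f g x y = (\<Sum>k=1..m. pd1 f k x y * pd2 g k x y - pd2 f k x y * pd1 g k x y)"

text \<open>Hamiltonian vector field X_f = (df/dy, -df/dx) of f on R^m x R^m
  (so that X_f g = {g,f}); components outside {1..m} are 0.\<close>
definition hamvf :: "nat \<Rightarrow> ((nat \<Rightarrow> real) \<Rightarrow> (nat \<Rightarrow> real) \<Rightarrow> real) \<Rightarrow> (nat \<Rightarrow> real) \<Rightarrow> (nat \<Rightarrow> real)
    \<Rightarrow> (nat \<Rightarrow> real) \<times> (nat \<Rightarrow> real)" where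
  "hamvf m f x y = ((\<lambda>k. if k \<in> {1..m} then pd2 f k x y else 0),
                    (\<lambda>k. if k \<in> {1..m} then - pd1 f k x y else 0))"

end

theory Submission
  imports Defs
begin


definition path :: "(nat \<Rightarrow> real) \<Rightarrow> (nat \<Rightarrow> real) \<Rightarrow> real \<Rightarrow> nat \<Rightarrow> real" where
  "path x dx t = (\<lambda>a. x a + t * dx a)"

definition ek :: "nat \<Rightarrow> nat \<Rightarrow> real" where "ek k = (\<lambda>a. if a = k then 1 else 0)"

lemma dotp_ek: "k \<in> {1..n} \<Longrightarrow> dotp n x (ek k) = x k"
  unfolding dotp_def ek_def by (simp add: if_distrib cong: if_cong)

lemma dotp_0r: "dotp n x (\<lambda>a. 0) = 0" unfolding dotp_def by simp

lemma D_dot: "((\<lambda>t. dotp n (path x dx t) (path y dy t)) has_real_derivative (dotp n dx y + dotp n x dy)) (at 0)"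
  unfolding dotp_def path_def
  by (auto intro!: derivative_eq_intros simp: sum.distrib[symmetric] algebra_simps)

lemma sin_eq_self: fixes x :: real assumes "sin x = x" shows "x = 0"
proof -
  have key: "sin y < y" if "0 < y" "y \<le> 1" for y :: real
  proof -
    have pi: "y/2 < pi" using pi_gt3 that by linarith
    have "cos (y/2) < cos 0" by (rule cos_monotone_0_pi) (use that pi in auto)
    moreover have "sin (y/2) > 0" using that pi by (intro sin_gt_zero) auto
    moreover have "sin (y/2) \<le> y/2" using that by (intro sin_x_le_x) auto
    moreover have "sin y = 2 * sin (y/2) * cos (y/2)" using sin_double[of "y/2"] by simp
    ultimately have "sin y < 2 * sin (y/2)" by (simp add: mult_strict_left_mono)
    then show ?thesis using \<open>sin (y/2) \<le> y/2\<close> by linarith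
  qed
  show ?thesis
  proof (rule ccontr)
    assume "x \<noteq> 0"
    then consider "x > 0" | "x < 0" by linarith
    then show False
    proof cases
      case 1 then show False using key[of x] assms sin_le_one[of x] by simp
    next
      case 2 then show False using key[of "-x"] assms sin_le_one[of "-x"] by simp
    qed
  qed
qed

lemma path0[simp]: "path x dx 0 = x" unfolding path_def by simp

lemma dotp_comm: "dotp n x y = dotp n y x" unfolding dotp_def by (simp add: mult.commute)


lemma D_sqrt: assumes "(f has_real_derivative D) (at 0)" "f 0 > 0"
  shows "((\<lambda>t. sqrt (f t)) has_real_derivative D / (2 * sqrt (f 0))) (at 0)"
  using DERIV_chain2[OF DERIV_real_sqrt[OF assms(2)] assms(1)] by (simp add: field_simps)

lemma D_sin: assumes "(f has_real_derivative D) (at 0)"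
  shows "((\<lambda>t. sin (f t)) has_real_derivative cos (f 0) * D) (at 0)"
  using DERIV_chain2[OF DERIV_sin assms] by simp

lemma D_cos: assumes "(f has_real_derivative D) (at 0)"
  shows "((\<lambda>t. cos (f t)) has_real_derivative - sin (f 0) * D) (at 0)"
  using DERIV_chain2[OF DERIV_cos assms] by simp

lemma D_vn:
  assumes "dotp n q q > 0"
  shows "((\<lambda>t. vnorm n (path q dq t)) has_real_derivative (dotp n q dq / vnorm n q)) (at 0)"
  unfolding vnorm_def
  using D_sqrt[OF D_dot[of n q dq q dq]] assms
  by (simp add: dotp_comm[of n dq q])

lemma vn_pos: "dotp n q q > 0 \<Longrightarrow> vnorm n q > 0" unfolding vnorm_def by simp

lemma D_kep:
  assumes "dotp n q q > 0"
  shows "((\<lambda>t. kepH n (path q dq t) (path p dp t)) has_real_derivative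
     (dotp n p dp + dotp n q dq / vnorm n q / (vnorm n q)^2)) (at 0)"
proof -
  have v: "vnorm n q > 0" using assms by (rule vn_pos)
  have d1: "((\<lambda>t. dotp n (path p dp t) (path p dp t) / 2) has_real_derivative (dotp n dp p + dotp n p dp) / 2) (at 0)"
    by (rule DERIV_cdivide[OF D_dot])
  have d2: "((\<lambda>t. 1 / vnorm n (path q dq t)) has_real_derivative (0 * vnorm n q - 1 * (dotp n q dq / vnorm n q)) / (vnorm n q * vnorm n q)) (at 0)"
    using DERIV_divide[OF DERIV_const[where k=1] D_vn[OF assms, of dq]] v by simp
  show ?thesis unfolding kepH_def
    by (rule DERIV_cong[OF DERIV_diff[OF d1 d2]]) (simp add: dotp_comm[of n dp p] power2_eq_square)
qed

lemma D_w:
  assumes "dotp n q q > 0" "kepH n q p < 0"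
  shows "((\<lambda>t. sqrt (- 2 * kepH n (path q dq t) (path p dp t))) has_real_derivative
     (- (dotp n p dp + dotp n q dq / vnorm n q / (vnorm n q)^2) / sqrt (- 2 * kepH n q p))) (at 0)"
proof -
  have "((\<lambda>t. sqrt (- 2 * kepH n (path q dq t) (path p dp t))) has_real_derivative
     (- 2 * (dotp n p dp + dotp n q dq / vnorm n q / (vnorm n q)^2)) / (2 * sqrt (- 2 * kepH n q p))) (at 0)"
    using D_sqrt[OF DERIV_cmult[OF D_kep[OF assms(1)]], of "-2" dq p dp] assms by simp
  then show ?thesis by (rule DERIV_cong) (simp add: divide_simps)
qed

definition "dQf n q dq = dotp n q dq / vnorm n q"
definition "dwf n q p dq dp = - (dotp n p dp + dQf n q dq / (vnorm n q)^2) / sqrt (- 2 * kepH n q p)"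
definition "ddf n q p dq dp = dotp n dq p + dotp n q dp"

definition "dUf n q p dq dp m = (if m \<in> {1..n} then dwf n q p dq dp * vnorm n q * p m
      + sqrt (- 2 * kepH n q p) * dQf n q dq * p m + sqrt (- 2 * kepH n q p) * vnorm n q * dp m
   else if m = n + 1 then dQf n q dq * dotp n p p + vnorm n q * (2 * dotp n p dp) else 0)"

definition "dVf n q p dq dp m = (if m \<in> {1..n} then - (dq m * vnorm n q - q m * dQf n q dq) / (vnorm n q)^2
      + ddf n q p dq dp * p m + dotp n q p * dp m
   else if m = n + 1 then - (dwf n q p dq dp * dotp n q p + sqrt (- 2 * kepH n q p) * ddf n q p dq dp) else 0)"

lemma path_app: "path x dx t m = x m + t * dx m" unfolding path_def by simp

lemma D_path: "((\<lambda>t. path x dx t m) has_real_derivative dx m) (at 0)"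
  unfolding path_def by (auto intro!: derivative_eq_intros)

lemma D_U:
  assumes "dotp n q q > 0" "kepH n q p < 0"
  shows "((\<lambda>t. LSu n (path q dq t) (path p dp t) m) has_real_derivative dUf n q p dq dp m) (at 0)"
proof -
  note w = D_w[OF assms, of dq dp]
  note vn = D_vn[OF assms(1), of dq]
  consider "m \<in> {1..n}" | "m = n + 1" | "m \<notin> {1..n}" "m \<noteq> n + 1" by blast
  then show ?thesis
  proof cases
    case 1
    have "((\<lambda>t. sqrt (- 2 * kepH n (path q dq t) (path p dp t)) * vnorm n (path q dq t) * path p dp t m) has_real_derivative
       (dwf n q p dq dp * vnorm n q + dQf n q dq * sqrt (- 2 * kepH n q p)) * p m + dp m * (sqrt (- 2 * kepH n q p) * vnorm n q)) (at 0)"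
      using DERIV_mult[OF DERIV_mult[OF w vn] D_path[of p dp m]] by (simp add: dwf_def dQf_def)
    then show ?thesis unfolding LSu_def dUf_def using 1
      by (simp cong: if_cong) (rule DERIV_cong, simp, simp add: algebra_simps)
  next
    case 2
    have "((\<lambda>t. vnorm n (path q dq t) * dotp n (path p dp t) (path p dp t) - 1) has_real_derivative
       (dQf n q dq * dotp n p p + (dotp n dp p + dotp n p dp) * vnorm n q) - 0) (at 0)"
      using DERIV_diff[OF DERIV_mult[OF vn D_dot[of n p dp p dp]] DERIV_const[of 1]] by (simp add: dQf_def)
    then show ?thesis unfolding LSu_def dUf_def using 2
      by (simp cong: if_cong) (rule DERIV_cong, simp, simp add: algebra_simps dotp_comm[of n dp p])
  next
    case 3
    then have "(\<lambda>t. LSu n (path q dq t) (path p dp t) m) = (\<lambda>t. 0)" by (auto simp: LSu_def)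
    then show ?thesis using 3 by (auto simp: dUf_def)
  qed
qed

lemma D_V:
  assumes "dotp n q q > 0" "kepH n q p < 0"
  shows "((\<lambda>t. LSv n (path q dq t) (path p dp t) m) has_real_derivative dVf n q p dq dp m) (at 0)"
proof -
  note w = D_w[OF assms, of dq dp]
  note vn = D_vn[OF assms(1), of dq]
  have v: "vnorm n q > 0" using vn_pos assms by blast
  note dd = D_dot[of n q dq p dp]
  consider "m \<in> {1..n}" | "m = n + 1" | "m \<notin> {1..n}" "m \<noteq> n + 1" by blast
  then show ?thesis
  proof cases
    case 1
    have "((\<lambda>t. - path q dq t m / vnorm n (path q dq t) + dotp n (path q dq t) (path p dp t) * path p dp t m) has_real_derivative
       - ((dq m * vnorm n q - q m * dQf n q dq) / (vnorm n q * vnorm n q)) + (ddf n q p dq dp * p m + dp m * dotp n q p)) (at 0)"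
      using DERIV_add[OF DERIV_minus[OF DERIV_divide[OF D_path[of q dq m] vn]] DERIV_mult[OF dd D_path[of p dp m]]] v
      by (simp add: dQf_def ddf_def)
    then show ?thesis unfolding LSv_def dVf_def using 1
      by (simp cong: if_cong) (rule DERIV_cong, simp, use v in \<open>simp add: field_simps power2_eq_square\<close>)
  next
    case 2
    have "((\<lambda>t. - sqrt (- 2 * kepH n (path q dq t) (path p dp t)) * dotp n (path q dq t) (path p dp t)) has_real_derivative
       - (dwf n q p dq dp * dotp n q p + ddf n q p dq dp * sqrt (- 2 * kepH n q p))) (at 0)"
      using DERIV_minus[OF DERIV_mult[OF w dd]] by (simp add: dwf_def ddf_def dQf_def)
    then show ?thesis unfolding LSv_def dVf_def using 2
      by (simp cong: if_cong) (rule DERIV_cong, simp, simp add: algebra_simps)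
  next
    case 3
    then have "(\<lambda>t. LSv n (path q dq t) (path p dp t) m) = (\<lambda>t. 0)" by (auto simp: LSv_def)
    then show ?thesis using 3 by (auto simp: dVf_def)
  qed
qed

definition vc :: "real \<Rightarrow> real \<Rightarrow> real \<Rightarrow> nat \<Rightarrow> real \<Rightarrow> nat \<Rightarrow> (nat \<Rightarrow> real) \<Rightarrow> (nat \<Rightarrow> real) \<Rightarrow> nat \<Rightarrow> real" where
  "vc \<alpha> \<beta> \<gamma> a \<delta> b q p = (\<lambda>k. \<alpha> * q k + \<beta> * p k + \<gamma> * ek a k + \<delta> * ek b k)"

lemma dotp_cong: "(\<And>k. k \<in> {1..n} \<Longrightarrow> x k = y k) \<Longrightarrow> dotp n z x = dotp n z y"
  unfolding dotp_def by (rule sum.cong) auto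

lemma sum_ek: assumes "a \<in> {1..n}" shows "(\<Sum>k=1..n. f k * ek a k) = f a"
proof -
  have "(\<Sum>k=1..n. f k * ek a k) = (\<Sum>k=1..n. if k = a then f a else 0)" by (rule sum.cong) (auto simp: ek_def)
  then show ?thesis using assms by simp
qed

lemma dotp_vc:
  assumes "a \<in> {1..n}" "b \<in> {1..n}"
  shows "dotp n x (vc \<alpha> \<beta> \<gamma> a \<delta> b q p) = \<alpha> * dotp n x q + \<beta> * dotp n x p + \<gamma> * x a + \<delta> * x b"
proof -
  have "dotp n x (vc \<alpha> \<beta> \<gamma> a \<delta> b q p) = (\<Sum>k=1..n. \<alpha> * (x k * q k)) + (\<Sum>k=1..n. \<beta> * (x k * p k))
     + (\<Sum>k=1..n. \<gamma> * (x k * ek a k)) + (\<Sum>k=1..n. \<delta> * (x k * ek b k))"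
    unfolding dotp_def vc_def by (simp add: sum.distrib[symmetric] algebra_simps)
  also have "\<dots> = \<alpha> * dotp n x q + \<beta> * dotp n x p + \<gamma> * x a + \<delta> * x b"
    using assms by (simp only: sum_distrib_left[symmetric] sum_ek dotp_def)
  finally show ?thesis .
qed

lemma sum_vc:
  assumes "a \<in> {1..n}" "b \<in> {1..n}" "c \<in> {1..n}" "e \<in> {1..n}"
  shows "(\<Sum>k=1..n. vc \<alpha> \<beta> \<gamma> a \<delta> b q p k * vc \<alpha>' \<beta>' \<gamma>' c \<delta>' e q p k) =
    \<alpha> * (\<alpha>' * dotp n q q + \<beta>' * dotp n q p + \<gamma>' * q c + \<delta>' * q e)
  + \<beta> * (\<alpha>' * dotp n p q + \<beta>' * dotp n p p + \<gamma>' * p c + \<delta>' * p e)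
  + \<gamma> * (\<alpha>' * q a + \<beta>' * p a + \<gamma>' * ek c a + \<delta>' * ek e a)
  + \<delta> * (\<alpha>' * q b + \<beta>' * p b + \<gamma>' * ek c b + \<delta>' * ek e b)" (is "_ = ?rhs")
proof -
  let ?v = "vc \<alpha>' \<beta>' \<gamma>' c \<delta>' e q p"
  have "(\<Sum>k=1..n. vc \<alpha> \<beta> \<gamma> a \<delta> b q p k * ?v k) = (\<Sum>k=1..n. \<alpha> * (q k * ?v k)) + (\<Sum>k=1..n. \<beta> * (p k * ?v k))
     + (\<Sum>k=1..n. \<gamma> * (?v k * ek a k)) + (\<Sum>k=1..n. \<delta> * (?v k * ek b k))"
    unfolding vc_def[of \<alpha>] by (simp add: sum.distrib[symmetric] algebra_simps)
  also have "\<dots> = \<alpha> * dotp n q ?v + \<beta> * dotp n p ?v + \<gamma> * ?v a + \<delta> * ?v b"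
    using assms by (simp only: sum_distrib_left[symmetric] sum_ek dotp_def)
  also have "\<dots> = ?rhs"
    using assms by (simp add: dotp_vc dotp_comm[of n p q]) (simp add: vc_def)
  finally show ?thesis .
qed

definition "wsq n q p = sqrt (- 2 * kepH n q p)"

definition "GQF n q p c a = vc (c * (q a / (vnorm n q ^ 3 * wsq n q p) + lenz n q p a / (vnorm n q ^ 3 * wsq n q p ^ 3)))
   (c * (- p a / wsq n q p)) (c * ((dotp n p p - 1 / vnorm n q) / wsq n q p)) a 0 a q p"
definition "GPF n q p c a = vc (c * (- p a / wsq n q p)) (c * (2 * q a / wsq n q p + lenz n q p a / wsq n q p ^ 3))
   (c * (- dotp n q p / wsq n q p)) a 0 a q p"
definition "GQL q p a b = vc 0 0 (p b) a (- p a) b q p"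
definition "GPL q p a b = vc 0 0 (q a) b (- q b) a q p"

lemma D_lenz:
  assumes "dotp n q q > 0"
  shows "((\<lambda>t. lenz n (path q dq t) (path p dp t) i) has_real_derivative
    (2 * dotp n p dp + dQf n q dq / (vnorm n q)^2) * q i + (dotp n p p - 1 / vnorm n q) * dq i
     - (ddf n q p dq dp * p i + dotp n q p * dp i)) (at 0)"
proof -
  have v: "vnorm n q > 0" using vn_pos assms by blast
  have d2: "((\<lambda>t. 1 / vnorm n (path q dq t)) has_real_derivative (0 * vnorm n q - 1 * (dotp n q dq / vnorm n q)) / (vnorm n q * vnorm n q)) (at 0)"
    using DERIV_divide[OF DERIV_const[where k=1] D_vn[OF assms, of dq]] v by simp
  have "((\<lambda>t. (dotp n (path p dp t) (path p dp t) - 1 / vnorm n (path q dq t)) * path q dq t i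
       - dotp n (path q dq t) (path p dp t) * path p dp t i) has_real_derivative
     ((dotp n dp p + dotp n p dp) - (0 * vnorm n q - 1 * (dotp n q dq / vnorm n q)) / (vnorm n q * vnorm n q)) * q i
       + dq i * (dotp n p p - 1 / vnorm n q) - ((dotp n dq p + dotp n q dp) * p i + dp i * dotp n q p)) (at 0)"
    using DERIV_diff[OF DERIV_mult[OF DERIV_diff[OF D_dot[of n p dp p dp] d2] D_path[of q dq i]]
        DERIV_mult[OF D_dot[of n q dq p dp] D_path[of p dp i]]] by simp
  then show ?thesis unfolding lenz_def
    by (rule DERIV_cong) (simp add: dQf_def ddf_def dotp_comm[of n dp p] power2_eq_square algebra_simps)
qed

lemma D_F:
  assumes "dotp n q q > 0" "kepH n q p < 0" "a \<in> {1..n}"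
  shows "((\<lambda>t. lenz n (path q dq t) (path p dp t) a / sqrt (- 2 * kepH n (path q dq t) (path p dp t))) has_real_derivative
    dotp n dq (GQF n q p 1 a) + dotp n dp (GPF n q p 1 a)) (at 0)"
proof -
  have v: "vnorm n q > 0" using vn_pos assms by blast
  have w: "wsq n q p > 0" using assms(2) by (simp add: wsq_def)
  show ?thesis
    apply (rule DERIV_cong[OF DERIV_divide[OF D_lenz[OF assms(1)] D_w[OF assms(1,2)]]])
    using w apply (simp add: wsq_def)
    using v w assms(3) unfolding GQF_def GPF_def dwf_def dQf_def ddf_def wsq_def[symmetric]
    apply (simp add: dotp_vc)
    apply (simp add: field_simps dotp_comm[of n dp p] dotp_comm[of n dq q] dotp_comm[of n dp q] power2_eq_square power3_eq_cube)
    done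
qed

definition "GQ n q p a b = (if a \<in> {1..n} \<and> b \<in> {1..n} then GQL q p a b
   else if a \<in> {1..n} \<and> b = n + 1 then GQF n q p 1 a
   else if a = n + 1 \<and> b \<in> {1..n} then GQF n q p (-1) b else (\<lambda>k. 0))"
definition "GP n q p a b = (if a \<in> {1..n} \<and> b \<in> {1..n} then GPL q p a b
   else if a \<in> {1..n} \<and> b = n + 1 then GPF n q p 1 a
   else if a = n + 1 \<and> b \<in> {1..n} then GPF n q p (-1) b else (\<lambda>k. 0))"

lemma dotp_GQF: "a \<in> {1..n} \<Longrightarrow> dotp n x (GQF n q p c a) = c * dotp n x (GQF n q p 1 a)"
  unfolding GQF_def by (simp add: dotp_vc algebra_simps)
lemma dotp_GPF: "a \<in> {1..n} \<Longrightarrow> dotp n x (GPF n q p c a) = c * dotp n x (GPF n q p 1 a)"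
  unfolding GPF_def by (simp add: dotp_vc algebra_simps)

lemma D_L:
  assumes "dotp n q q > 0" "kepH n q p < 0" "a \<in> {1..n+1}" "b \<in> {1..n+1}"
  shows "((\<lambda>t. Lfun n a b (path q dq t) (path p dp t)) has_real_derivative
    dotp n dq (GQ n q p a b) + dotp n dp (GP n q p a b)) (at 0)"
proof -
  consider "a \<in> {1..n}" "b \<in> {1..n}" | "a \<in> {1..n}" "b = n + 1" | "a = n + 1" "b \<in> {1..n}" | "a = n + 1" "b = n + 1"
    using assms(3,4) by fastforce
  then show ?thesis
  proof cases
    case 1
    have "((\<lambda>t. path q dq t a * path p dp t b - path q dq t b * path p dp t a) has_real_derivative
       (dq a * p b + dp b * q a) - (dq b * p a + dp a * q b)) (at 0)"
      using DERIV_diff[OF DERIV_mult[OF D_path D_path] DERIV_mult[OF D_path D_path]] by simp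
    then show ?thesis using 1 unfolding Lfun_def GQ_def GP_def GQL_def GPL_def
      by (simp add: dotp_vc) (rule DERIV_cong, simp, simp add: algebra_simps)
  next
    case 2
    then show ?thesis using D_F[OF assms(1,2) 2(1), of dq dp] unfolding Lfun_def GQ_def GP_def
      by simp
  next
    case 3
    then show ?thesis using DERIV_minus[OF D_F[OF assms(1,2) 3(2), of dq dp]] unfolding Lfun_def GQ_def GP_def
      by (simp add: dotp_GQF[of b n _ _ _ "-1"] dotp_GPF[of b n _ _ _ "-1"])
  next
    case 4
    then show ?thesis unfolding Lfun_def GQ_def GP_def by (simp add: dotp_0r)
  qed
qed

lemma pd1_eq: "pd1 f k x y = deriv (\<lambda>t. f (path x (ek k) t) (path y (\<lambda>_. 0) t)) 0"
proof -
  have "\<And>t. x(k := x k + t) = path x (ek k) t" "\<And>t. path y (\<lambda>_. 0) t = y"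
    by (auto simp: path_def ek_def)
  then show ?thesis unfolding pd1_def by simp
qed

lemma pd2_eq: "pd2 f k x y = deriv (\<lambda>t. f (path x (\<lambda>_. 0) t) (path y (ek k) t)) 0"
proof -
  have "\<And>t. y(k := y k + t) = path y (ek k) t" "\<And>t. path x (\<lambda>_. 0) t = x"
    by (auto simp: path_def ek_def)
  then show ?thesis unfolding pd2_def by simp
qed

lemma pd_L:
  assumes "dotp n q q > 0" "kepH n q p < 0" "a \<in> {1..n+1}" "b \<in> {1..n+1}" "k \<in> {1..n}"
  shows "pd1 (Lfun n a b) k q p = GQ n q p a b k" "pd2 (Lfun n a b) k q p = GP n q p a b k"
  using DERIV_imp_deriv[OF D_L[OF assms(1-4), of "ek k" "\<lambda>_. 0"]]
    DERIV_imp_deriv[OF D_L[OF assms(1-4), of "\<lambda>_. 0" "ek k"]] assms(5)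
  by (simp_all add: pd1_eq pd2_eq dotp_comm[of n "ek k"] dotp_ek dotp_comm[of n "\<lambda>_. 0"] dotp_0r)

lemma dotp_qq: "dotp n q q = vnorm n q ^ 2"
  unfolding vnorm_def dotp_def by (simp add: sum_nonneg)

lemma dotp_pp: "dotp n q q > 0 \<Longrightarrow> kepH n q p < 0 \<Longrightarrow> dotp n p p = 2 / vnorm n q - wsq n q p ^ 2"
  unfolding wsq_def kepH_def by simp

lemma lenz_alt: "dotp n q q > 0 \<Longrightarrow> kepH n q p < 0 \<Longrightarrow>
   lenz n q p a = (1 / vnorm n q - wsq n q p ^ 2) * q a - dotp n q p * p a"
  unfolding lenz_def by (simp add: dotp_pp)

lemma ek_sym: "ek a b = ek b a" unfolding ek_def by auto

lemma FF:
  assumes "dotp n q q > 0" "kepH n q p < 0" "a \<in> {1..n}" "c \<in> {1..n}"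
  shows "(\<Sum>k=1..n. GQF n q p \<sigma> a k * GPF n q p \<tau> c k) - (\<Sum>k=1..n. GPF n q p \<sigma> a k * GQF n q p \<tau> c k)
     = \<sigma> * \<tau> * (q a * p c - q c * p a)"
proof -
  have v: "vnorm n q > 0" using vn_pos assms by blast
  have w: "wsq n q p > 0" using assms(2) by (simp add: wsq_def)
  show ?thesis
    unfolding GQF_def GPF_def
    using assms(3,4) v w
    apply (simp only: sum_vc)
    apply (simp only: dotp_qq[of n q] dotp_pp[OF assms(1,2)] lenz_alt[OF assms(1,2)] dotp_comm[of n p q] ek_sym[of a c])
    apply (simp add: field_simps)
    apply algebra
    done
qed

lemma LF:
  assumes "dotp n q q > 0" "kepH n q p < 0" "a \<in> {1..n}" "b \<in> {1..n}" "c \<in> {1..n}"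
  shows "(\<Sum>k=1..n. GQL q p a b k * GPF n q p \<sigma> c k) - (\<Sum>k=1..n. GPL q p a b k * GQF n q p \<sigma> c k)
     = \<sigma> * (ek a c * lenz n q p b - ek b c * lenz n q p a) / wsq n q p"
proof -
  have v: "vnorm n q > 0" using vn_pos assms by blast
  have w: "wsq n q p > 0" using assms(2) by (simp add: wsq_def)
  show ?thesis
    unfolding GQF_def GPF_def GQL_def GPL_def
    using assms(3,4,5) v w
    apply (simp only: sum_vc)
    apply (simp only: dotp_qq[of n q] dotp_pp[OF assms(1,2)] lenz_alt[OF assms(1,2)] dotp_comm[of n p q] ek_sym[of c])
    apply (simp add: field_simps)
    done
qed

lemma LL:
  assumes "a \<in> {1..n}" "b \<in> {1..n}" "c \<in> {1..n}" "d \<in> {1..n}"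
  shows "(\<Sum>k=1..n. GQL q p a b k * GPL q p c d k) - (\<Sum>k=1..n. GPL q p a b k * GQL q p c d k)
     = - ek b c * (q a * p d - q d * p a) + ek a c * (q b * p d - q d * p b)
       + ek b d * (q a * p c - q c * p a) - ek a d * (q b * p c - q c * p b)"
  unfolding GQL_def GPL_def
  using assms
  apply (simp only: sum_vc)
  apply (simp only: ek_sym[of d] ek_sym[of c])
  apply algebra
  done

lemma sw_lem: fixes f g h i :: "nat \<Rightarrow> real"
  shows "(\<Sum>k=1..n. f k * g k) - (\<Sum>k=1..n. h k * i k) = - ((\<Sum>k=1..n. i k * h k) - (\<Sum>k=1..n. g k * f k))"
proof -
  have "(\<Sum>k=1..n. f k * g k) = (\<Sum>k=1..n. g k * f k)" "(\<Sum>k=1..n. h k * i k) = (\<Sum>k=1..n. i k * h k)"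
    by (simp_all add: mult.commute)
  then show ?thesis by simp
qed

lemma bracket_gen:
  assumes "dotp n q q > 0" "kepH n q p < 0"
    "a \<in> {1..n+1}" "b \<in> {1..n+1}" "c \<in> {1..n+1}" "d \<in> {1..n+1}"
  shows "poisson n (Lfun n a b) (Lfun n c d) q p = - ek b c * Lfun n a d q p + ek a c * Lfun n b d q p
           + ek b d * Lfun n a c q p - ek a d * Lfun n b c q p"
proof -
  have P: "poisson n (Lfun n a b) (Lfun n c d) q p = (\<Sum>k=1..n. GQ n q p a b k * GP n q p c d k) - (\<Sum>k=1..n. GP n q p a b k * GQ n q p c d k)"
    unfolding poisson_def sum_subtractf[symmetric] proof (rule sum.cong)
    fix k assume k: "k \<in> {1..n}"
    show "pd1 (Lfun n a b) k q p * pd2 (Lfun n c d) k q p - pd2 (Lfun n a b) k q p * pd1 (Lfun n c d) k q p =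
         GQ n q p a b k * GP n q p c d k - GP n q p a b k * GQ n q p c d k"
      using pd_L[OF assms(1,2,3,4) k] pd_L[OF assms(1,2,5,6) k] by simp
  qed simp
  note sw = sw_lem[where n=n]
  have ab: "(a \<in> {1..n} \<and> b \<in> {1..n}) \<or> (a \<in> {1..n} \<and> b = n + 1) \<or> (a = n + 1 \<and> b \<in> {1..n}) \<or> (a = n + 1 \<and> b = n + 1)"
    using assms(3,4) by fastforce
  have cd: "(c \<in> {1..n} \<and> d \<in> {1..n}) \<or> (c \<in> {1..n} \<and> d = n + 1) \<or> (c = n + 1 \<and> d \<in> {1..n}) \<or> (c = n + 1 \<and> d = n + 1)"
    using assms(5,6) by fastforce
  have w: "wsq n q p > 0" using assms(2) by (simp add: wsq_def)
  have cs1: "a \<in> {1..n} \<and> b \<in> {1..n} \<Longrightarrow> c \<in> {1..n} \<and> d \<in> {1..n} \<Longrightarrow> ?thesis"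
  proof -
    assume h1: "a \<in> {1..n} \<and> b \<in> {1..n}" and h2: "c \<in> {1..n} \<and> d \<in> {1..n}"
    have e: "poisson n (Lfun n a b) (Lfun n c d) q p = (\<Sum>k=1..n. GQL q p a b k * GPL q p c d k) - (\<Sum>k=1..n. GPL q p a b k * GQL q p c d k)"
      using h1 h2 unfolding P GQ_def GP_def by simp
    show ?thesis using h1 h2 LL[of a n b c d q p] unfolding e by (auto simp: Lfun_def ek_def wsq_def field_simps)
  qed
  have cs2: "a \<in> {1..n} \<and> b \<in> {1..n} \<Longrightarrow> c \<in> {1..n} \<and> d = n + 1 \<Longrightarrow> ?thesis"
  proof -
    assume h1: "a \<in> {1..n} \<and> b \<in> {1..n}" and h2: "c \<in> {1..n} \<and> d = n + 1"
    have e: "poisson n (Lfun n a b) (Lfun n c d) q p = (\<Sum>k=1..n. GQL q p a b k * GPF n q p 1 c k) - (\<Sum>k=1..n. GPL q p a b k * GQF n q p 1 c k)"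
      using h1 h2 unfolding P GQ_def GP_def by simp
    show ?thesis using h1 h2 LF[OF assms(1,2), of a b c "1"] unfolding e by (auto simp: Lfun_def ek_def wsq_def field_simps)
  qed
  have cs3: "a \<in> {1..n} \<and> b \<in> {1..n} \<Longrightarrow> c = n + 1 \<and> d \<in> {1..n} \<Longrightarrow> ?thesis"
  proof -
    assume h1: "a \<in> {1..n} \<and> b \<in> {1..n}" and h2: "c = n + 1 \<and> d \<in> {1..n}"
    have e: "poisson n (Lfun n a b) (Lfun n c d) q p = (\<Sum>k=1..n. GQL q p a b k * GPF n q p (-1) d k) - (\<Sum>k=1..n. GPL q p a b k * GQF n q p (-1) d k)"
      using h1 h2 unfolding P GQ_def GP_def by simp
    show ?thesis using h1 h2 LF[OF assms(1,2), of a b d "-1"] unfolding e by (auto simp: Lfun_def ek_def wsq_def field_simps)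
  qed
  have cs4: "a \<in> {1..n} \<and> b \<in> {1..n} \<Longrightarrow> c = n + 1 \<and> d = n + 1 \<Longrightarrow> ?thesis"
  proof -
    assume h1: "a \<in> {1..n} \<and> b \<in> {1..n}" and h2: "c = n + 1 \<and> d = n + 1"
    have e: "poisson n (Lfun n a b) (Lfun n c d) q p = (\<Sum>k=1..n. GQL q p a b k * (\<lambda>k. 0) k) - (\<Sum>k=1..n. GPL q p a b k * (\<lambda>k. 0) k)"
      using h1 h2 unfolding P GQ_def GP_def by simp
    show ?thesis using h1 h2 unfolding e by (auto simp: Lfun_def ek_def)
  qed
  have cs5: "a \<in> {1..n} \<and> b = n + 1 \<Longrightarrow> c \<in> {1..n} \<and> d \<in> {1..n} \<Longrightarrow> ?thesis"
  proof -
    assume h1: "a \<in> {1..n} \<and> b = n + 1" and h2: "c \<in> {1..n} \<and> d \<in> {1..n}"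
    have e: "poisson n (Lfun n a b) (Lfun n c d) q p = (\<Sum>k=1..n. GQF n q p 1 a k * GPL q p c d k) - (\<Sum>k=1..n. GPF n q p 1 a k * GQL q p c d k)"
      using h1 h2 unfolding P GQ_def GP_def by simp
    show ?thesis using h1 h2 LF[OF assms(1,2), of c d a "1"] unfolding e sw[of "GQF n q p 1 a"] by (auto simp: Lfun_def ek_def wsq_def field_simps)
  qed
  have cs6: "a \<in> {1..n} \<and> b = n + 1 \<Longrightarrow> c \<in> {1..n} \<and> d = n + 1 \<Longrightarrow> ?thesis"
  proof -
    assume h1: "a \<in> {1..n} \<and> b = n + 1" and h2: "c \<in> {1..n} \<and> d = n + 1"
    have e: "poisson n (Lfun n a b) (Lfun n c d) q p = (\<Sum>k=1..n. GQF n q p 1 a k * GPF n q p 1 c k) - (\<Sum>k=1..n. GPF n q p 1 a k * GQF n q p 1 c k)"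
      using h1 h2 unfolding P GQ_def GP_def by simp
    show ?thesis using h1 h2 FF[OF assms(1,2), of a c "1" "1"] unfolding e by (auto simp: Lfun_def ek_def wsq_def field_simps)
  qed
  have cs7: "a \<in> {1..n} \<and> b = n + 1 \<Longrightarrow> c = n + 1 \<and> d \<in> {1..n} \<Longrightarrow> ?thesis"
  proof -
    assume h1: "a \<in> {1..n} \<and> b = n + 1" and h2: "c = n + 1 \<and> d \<in> {1..n}"
    have e: "poisson n (Lfun n a b) (Lfun n c d) q p = (\<Sum>k=1..n. GQF n q p 1 a k * GPF n q p (-1) d k) - (\<Sum>k=1..n. GPF n q p 1 a k * GQF n q p (-1) d k)"
      using h1 h2 unfolding P GQ_def GP_def by simp
    show ?thesis using h1 h2 FF[OF assms(1,2), of a d "1" "-1"] unfolding e by (auto simp: Lfun_def ek_def wsq_def field_simps)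
  qed
  have cs8: "a \<in> {1..n} \<and> b = n + 1 \<Longrightarrow> c = n + 1 \<and> d = n + 1 \<Longrightarrow> ?thesis"
  proof -
    assume h1: "a \<in> {1..n} \<and> b = n + 1" and h2: "c = n + 1 \<and> d = n + 1"
    have e: "poisson n (Lfun n a b) (Lfun n c d) q p = (\<Sum>k=1..n. GQF n q p 1 a k * (\<lambda>k. 0) k) - (\<Sum>k=1..n. GPF n q p 1 a k * (\<lambda>k. 0) k)"
      using h1 h2 unfolding P GQ_def GP_def by simp
    show ?thesis using h1 h2 unfolding e by (auto simp: Lfun_def ek_def)
  qed
  have cs9: "a = n + 1 \<and> b \<in> {1..n} \<Longrightarrow> c \<in> {1..n} \<and> d \<in> {1..n} \<Longrightarrow> ?thesis"
  proof -
    assume h1: "a = n + 1 \<and> b \<in> {1..n}" and h2: "c \<in> {1..n} \<and> d \<in> {1..n}"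
    have e: "poisson n (Lfun n a b) (Lfun n c d) q p = (\<Sum>k=1..n. GQF n q p (-1) b k * GPL q p c d k) - (\<Sum>k=1..n. GPF n q p (-1) b k * GQL q p c d k)"
      using h1 h2 unfolding P GQ_def GP_def by simp
    show ?thesis using h1 h2 LF[OF assms(1,2), of c d b "-1"] unfolding e sw[of "GQF n q p (-1) b"] by (auto simp: Lfun_def ek_def wsq_def field_simps)
  qed
  have cs10: "a = n + 1 \<and> b \<in> {1..n} \<Longrightarrow> c \<in> {1..n} \<and> d = n + 1 \<Longrightarrow> ?thesis"
  proof -
    assume h1: "a = n + 1 \<and> b \<in> {1..n}" and h2: "c \<in> {1..n} \<and> d = n + 1"
    have e: "poisson n (Lfun n a b) (Lfun n c d) q p = (\<Sum>k=1..n. GQF n q p (-1) b k * GPF n q p 1 c k) - (\<Sum>k=1..n. GPF n q p (-1) b k * GQF n q p 1 c k)"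
      using h1 h2 unfolding P GQ_def GP_def by simp
    show ?thesis using h1 h2 FF[OF assms(1,2), of b c "-1" "1"] unfolding e by (auto simp: Lfun_def ek_def wsq_def field_simps)
  qed
  have cs11: "a = n + 1 \<and> b \<in> {1..n} \<Longrightarrow> c = n + 1 \<and> d \<in> {1..n} \<Longrightarrow> ?thesis"
  proof -
    assume h1: "a = n + 1 \<and> b \<in> {1..n}" and h2: "c = n + 1 \<and> d \<in> {1..n}"
    have e: "poisson n (Lfun n a b) (Lfun n c d) q p = (\<Sum>k=1..n. GQF n q p (-1) b k * GPF n q p (-1) d k) - (\<Sum>k=1..n. GPF n q p (-1) b k * GQF n q p (-1) d k)"
      using h1 h2 unfolding P GQ_def GP_def by simp
    show ?thesis using h1 h2 FF[OF assms(1,2), of b d "-1" "-1"] unfolding e by (auto simp: Lfun_def ek_def wsq_def field_simps)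
  qed
  have cs12: "a = n + 1 \<and> b \<in> {1..n} \<Longrightarrow> c = n + 1 \<and> d = n + 1 \<Longrightarrow> ?thesis"
  proof -
    assume h1: "a = n + 1 \<and> b \<in> {1..n}" and h2: "c = n + 1 \<and> d = n + 1"
    have e: "poisson n (Lfun n a b) (Lfun n c d) q p = (\<Sum>k=1..n. GQF n q p (-1) b k * (\<lambda>k. 0) k) - (\<Sum>k=1..n. GPF n q p (-1) b k * (\<lambda>k. 0) k)"
      using h1 h2 unfolding P GQ_def GP_def by simp
    show ?thesis using h1 h2 unfolding e by (auto simp: Lfun_def ek_def)
  qed
  have cs13: "a = n + 1 \<and> b = n + 1 \<Longrightarrow> c \<in> {1..n} \<and> d \<in> {1..n} \<Longrightarrow> ?thesis"
  proof -
    assume h1: "a = n + 1 \<and> b = n + 1" and h2: "c \<in> {1..n} \<and> d \<in> {1..n}"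
    have e: "poisson n (Lfun n a b) (Lfun n c d) q p = (\<Sum>k=1..n. (\<lambda>k. 0) k * GPL q p c d k) - (\<Sum>k=1..n. (\<lambda>k. 0) k * GQL q p c d k)"
      using h1 h2 unfolding P GQ_def GP_def by simp
    show ?thesis using h1 h2 unfolding e by (auto simp: Lfun_def ek_def)
  qed
  have cs14: "a = n + 1 \<and> b = n + 1 \<Longrightarrow> c \<in> {1..n} \<and> d = n + 1 \<Longrightarrow> ?thesis"
  proof -
    assume h1: "a = n + 1 \<and> b = n + 1" and h2: "c \<in> {1..n} \<and> d = n + 1"
    have e: "poisson n (Lfun n a b) (Lfun n c d) q p = (\<Sum>k=1..n. (\<lambda>k. 0) k * GPF n q p 1 c k) - (\<Sum>k=1..n. (\<lambda>k. 0) k * GQF n q p 1 c k)"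
      using h1 h2 unfolding P GQ_def GP_def by simp
    show ?thesis using h1 h2 unfolding e by (auto simp: Lfun_def ek_def)
  qed
  have cs15: "a = n + 1 \<and> b = n + 1 \<Longrightarrow> c = n + 1 \<and> d \<in> {1..n} \<Longrightarrow> ?thesis"
  proof -
    assume h1: "a = n + 1 \<and> b = n + 1" and h2: "c = n + 1 \<and> d \<in> {1..n}"
    have e: "poisson n (Lfun n a b) (Lfun n c d) q p = (\<Sum>k=1..n. (\<lambda>k. 0) k * GPF n q p (-1) d k) - (\<Sum>k=1..n. (\<lambda>k. 0) k * GQF n q p (-1) d k)"
      using h1 h2 unfolding P GQ_def GP_def by simp
    show ?thesis using h1 h2 unfolding e by (auto simp: Lfun_def ek_def)
  qed
  have cs16: "a = n + 1 \<and> b = n + 1 \<Longrightarrow> c = n + 1 \<and> d = n + 1 \<Longrightarrow> ?thesis"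
  proof -
    assume h1: "a = n + 1 \<and> b = n + 1" and h2: "c = n + 1 \<and> d = n + 1"
    have e: "poisson n (Lfun n a b) (Lfun n c d) q p = (\<Sum>k=1..n. (\<lambda>k. 0) k * (\<lambda>k. 0) k) - (\<Sum>k=1..n. (\<lambda>k. 0) k * (\<lambda>k. 0) k)"
      using h1 h2 unfolding P GQ_def GP_def by simp
    show ?thesis using h1 h2 unfolding e by (auto simp: Lfun_def ek_def)
  qed
  from ab cd show ?thesis
    by (elim disjE) (erule (1) cs1 cs2 cs3 cs4 cs5 cs6 cs7 cs8 cs9 cs10 cs11 cs12 cs13 cs14 cs15 cs16)+
qed




lemma vc_app: "vc \<alpha> \<beta> \<gamma> a \<delta> b q p k = \<alpha> * q k + \<beta> * p k + \<gamma> * ek a k + \<delta> * ek b k"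
  by (simp add: vc_def)

lemma HF:
  assumes "dotp n q q > 0" "kepH n q p < 0" "a \<in> {1..n}"
    and dq: "\<And>k. k \<in> {1..n} \<Longrightarrow> dq k = GPF n q p \<sigma> a k"
    and dp: "\<And>k. k \<in> {1..n} \<Longrightarrow> dp k = GQF n q p (-\<sigma>) a k"
  shows "dwf n q p dq dp = 0"
    and "m \<in> {1..n+1} \<Longrightarrow> dUf n q p dq dp m = \<sigma> * (LSu n q p a * ek (n+1) m - LSu n q p (n+1) * ek a m)
           - dVf n q p dq dp (n+1) * LSv n q p m"
    and "m \<in> {1..n+1} \<Longrightarrow> dVf n q p dq dp m = \<sigma> * (LSv n q p a * ek (n+1) m - LSv n q p (n+1) * ek a m)
           + dVf n q p dq dp (n+1) * LSu n q p m"
proof -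
  have v: "vnorm n q > 0" using vn_pos assms by blast
  have w: "wsq n q p > 0" using assms(2) by (simp add: wsq_def)
  have d1: "dotp n q dq = dotp n q (GPF n q p \<sigma> a)" "dotp n p dq = dotp n p (GPF n q p \<sigma> a)"
    "dotp n q dp = dotp n q (GQF n q p (-\<sigma>) a)" "dotp n p dp = dotp n p (GQF n q p (-\<sigma>) a)"
    by (auto intro!: dotp_cong simp: dq dp)
  have d2: "dotp n dq p = dotp n p dq" by (rule dotp_comm)
  note ds = d2 d1 GPF_def GQF_def dotp_vc[OF assms(3) assms(3)]
  note sub = dotp_qq[of n q] dotp_pp[OF assms(1,2)] lenz_alt[OF assms(1,2)] dotp_comm[of n p q]
  show "dwf n q p dq dp = 0"
    unfolding dwf_def dQf_def wsq_def[symmetric] ds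
    using v w by (simp only: sub) (simp add: field_simps, algebra)
  have dqm: "dq m = GPF n q p \<sigma> a m" "dp m = GQF n q p (-\<sigma>) a m" if "m \<in> {1..n}" for m
    using dq dp that by auto
  show "dUf n q p dq dp m = \<sigma> * (LSu n q p a * ek (n+1) m - LSu n q p (n+1) * ek a m)
           - dVf n q p dq dp (n+1) * LSv n q p m" if m: "m \<in> {1..n+1}"
  proof (cases "m = n + 1")
    case True
    have e: "ek (n+1) m = 1" "ek a m = 0" "m \<notin> {1..n}" "(n + 1 \<in> {1..n}) = False" "a \<in> {1..n}" "(m = n + 1) = True"
      using True assms(3) by (auto simp: ek_def)
    show ?thesis
      unfolding dUf_def dVf_def dwf_def dQf_def ddf_def LSu_def LSv_def wsq_def[symmetric] ds
      using v w
      apply (simp only: e if_False if_True simp_thms)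
      apply (simp only: sub)
      apply (simp only: divide_inverse inverse_mult_distrib power_inverse[symmetric] inverse_minus_eq)
      apply (subgoal_tac "vnorm n q * inverse (vnorm n q) = 1" "wsq n q p * inverse (wsq n q p) = 1")
        apply algebra
       apply simp_all
      done
  next
    case False
    then have m': "m \<in> {1..n}" using m by auto
    have e: "ek (n+1) m = 0" "(m \<in> {1..n}) = True" "(n + 1 \<in> {1..n}) = False" "a \<in> {1..n}" "(n + 1 = n + 1) = True"
      using m' assms(3) by (auto simp: ek_def)
    show ?thesis
      unfolding dUf_def dVf_def dwf_def dQf_def ddf_def LSu_def LSv_def wsq_def[symmetric] ds dqm[OF m']
      using v w
      apply (simp only: e if_False if_True simp_thms vc_app)
      apply (simp only: sub)
      apply (simp only: divide_inverse inverse_mult_distrib power_inverse[symmetric] inverse_minus_eq)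
      apply (subgoal_tac "vnorm n q * inverse (vnorm n q) = 1" "wsq n q p * inverse (wsq n q p) = 1")
        apply algebra
       apply simp_all
      done
  qed
  show "dVf n q p dq dp m = \<sigma> * (LSv n q p a * ek (n+1) m - LSv n q p (n+1) * ek a m)
           + dVf n q p dq dp (n+1) * LSu n q p m" if m: "m \<in> {1..n+1}"
  proof (cases "m = n + 1")
    case True
    have e: "ek (n+1) m = 1" "ek a m = 0" "m \<notin> {1..n}" "(n + 1 \<in> {1..n}) = False" "a \<in> {1..n}" "(m = n + 1) = True"
      using True assms(3) by (auto simp: ek_def)
    show ?thesis
      unfolding dUf_def dVf_def dwf_def dQf_def ddf_def LSu_def LSv_def wsq_def[symmetric] ds
      using v w
      apply (simp only: e if_False if_True simp_thms)
      apply (simp only: sub)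
      apply (simp only: divide_inverse inverse_mult_distrib power_inverse[symmetric] inverse_minus_eq)
      apply (subgoal_tac "vnorm n q * inverse (vnorm n q) = 1" "wsq n q p * inverse (wsq n q p) = 1")
        apply algebra
       apply simp_all
      done
  next
    case False
    then have m': "m \<in> {1..n}" using m by auto
    have e: "ek (n+1) m = 0" "(m \<in> {1..n}) = True" "(n + 1 \<in> {1..n}) = False" "a \<in> {1..n}" "(n + 1 = n + 1) = True"
      using m' assms(3) by (auto simp: ek_def)
    show ?thesis
      unfolding dUf_def dVf_def dwf_def dQf_def ddf_def LSu_def LSv_def wsq_def[symmetric] ds dqm[OF m']
      using v w
      apply (simp only: e if_False if_True simp_thms vc_app)
      apply (simp only: sub)
      apply (simp only: divide_inverse inverse_mult_distrib power_inverse[symmetric] inverse_minus_eq)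
      apply (subgoal_tac "vnorm n q * inverse (vnorm n q) = 1" "wsq n q p * inverse (wsq n q p) = 1")
        apply algebra
       apply simp_all
      done
  qed
qed

lemma HL:
  assumes "dotp n q q > 0" "kepH n q p < 0" "a \<in> {1..n}" "b \<in> {1..n}"
    and dq: "\<And>k. k \<in> {1..n} \<Longrightarrow> dq k = vc 0 0 (q a) b (- q b) a q p k"
    and dp: "\<And>k. k \<in> {1..n} \<Longrightarrow> dp k = vc 0 0 (- p b) a (p a) b q p k"
  shows "dwf n q p dq dp = 0"
    and "m \<in> {1..n+1} \<Longrightarrow> dUf n q p dq dp m = LSu n q p a * ek b m - LSu n q p b * ek a m
           - dVf n q p dq dp (n+1) * LSv n q p m"
    and "m \<in> {1..n+1} \<Longrightarrow> dVf n q p dq dp m = LSv n q p a * ek b m - LSv n q p b * ek a m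
           + dVf n q p dq dp (n+1) * LSu n q p m"
proof -
  have v: "vnorm n q > 0" using vn_pos assms by blast
  have w: "wsq n q p > 0" using assms(2) by (simp add: wsq_def)
  have d1: "dotp n q dq = dotp n q (vc 0 0 (q a) b (- q b) a q p)" "dotp n p dq = dotp n p (vc 0 0 (q a) b (- q b) a q p)"
    "dotp n q dp = dotp n q (vc 0 0 (- p b) a (p a) b q p)" "dotp n p dp = dotp n p (vc 0 0 (- p b) a (p a) b q p)"
    by (auto intro!: dotp_cong simp: dq dp)
  have d2: "dotp n dq p = dotp n p dq" by (rule dotp_comm)
  have z: "dotp n q dq = 0" "dotp n p dp = 0" "ddf n q p dq dp = 0"
    unfolding ddf_def d2 d1 using assms(3,4) by (simp_all add: dotp_vc)
  show dw: "dwf n q p dq dp = 0" unfolding dwf_def dQf_def z by simp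
  have dt: "dVf n q p dq dp (n+1) = 0" unfolding dVf_def dw z by simp
  have dqm: "dq m = vc 0 0 (q a) b (- q b) a q p m" "dp m = vc 0 0 (- p b) a (p a) b q p m" if "m \<in> {1..n}" for m
    using dq dp that by auto
  have eN: "ek a (n+1) = 0" "ek b (n+1) = 0" using assms(3,4) by (auto simp: ek_def)
  show "dUf n q p dq dp m = LSu n q p a * ek b m - LSu n q p b * ek a m
           - dVf n q p dq dp (n+1) * LSv n q p m" if m: "m \<in> {1..n+1}"
  proof (cases "m = n + 1")
    case True then show ?thesis unfolding dt dUf_def z dQf_def using eN by simp
  next
    case False
    then have m': "m \<in> {1..n}" using m by auto
    then show ?thesis unfolding dt dUf_def dw dQf_def z LSu_def dqm[OF m'] vc_app using assms(3,4)
      by (simp add: algebra_simps)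
  qed
  show "dVf n q p dq dp m = LSv n q p a * ek b m - LSv n q p b * ek a m
           + dVf n q p dq dp (n+1) * LSu n q p m" if m: "m \<in> {1..n+1}"
  proof (cases "m = n + 1")
    case True then show ?thesis using dt eN True by simp
  next
    case False
    then have m': "m \<in> {1..n}" using m by auto
    then show ?thesis unfolding dt dVf_def dw dQf_def z LSv_def dqm[OF m'] vc_app using assms(3,4) v
      by (simp add: field_simps power2_eq_square)
  qed
qed

lemma D_LS:
  fixes dq dp :: "nat \<Rightarrow> real"
  assumes "dotp n q q > 0" "kepH n q p < 0"
  defines "\<theta> \<equiv> LSv n q p (n+1)" and "d\<theta> \<equiv> dVf n q p dq dp (n+1)"
  shows "((\<lambda>t. fst (LSmap n (path q dq t) (path p dp t)) m) has_real_derivative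
     (- sin \<theta> * d\<theta> * LSu n q p m + cos \<theta> * dUf n q p dq dp m) + (cos \<theta> * d\<theta> * LSv n q p m + sin \<theta> * dVf n q p dq dp m)) (at 0)"
    and "((\<lambda>t. snd (LSmap n (path q dq t) (path p dp t)) m) has_real_derivative
     (((- cos \<theta> * d\<theta> * LSu n q p m - sin \<theta> * dUf n q p dq dp m) + (- sin \<theta> * d\<theta> * LSv n q p m + cos \<theta> * dVf n q p dq dp m))
        * sqrt (- 2 * kepH n q p) - (- sin \<theta> * LSu n q p m + cos \<theta> * LSv n q p m) * dwf n q p dq dp)
      / (sqrt (- 2 * kepH n q p) * sqrt (- 2 * kepH n q p))) (at 0)"
proof -
  note U = D_U[OF assms(1,2), of dq dp m] and V = D_V[OF assms(1,2), of dq dp m]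
  note T = D_V[OF assms(1,2), of dq dp "n+1"]
  note W = D_w[OF assms(1,2), of dq dp]
  have f: "fst (LSmap n x y) m = cos (LSv n x y (n+1)) * LSu n x y m + sin (LSv n x y (n+1)) * LSv n x y m" for x y
    unfolding LSmap_def Let_def by simp
  have g: "snd (LSmap n x y) m = (- sin (LSv n x y (n+1)) * LSu n x y m + cos (LSv n x y (n+1)) * LSv n x y m) / sqrt (- 2 * kepH n x y)" for x y
    unfolding LSmap_def Let_def by simp
  show "((\<lambda>t. fst (LSmap n (path q dq t) (path p dp t)) m) has_real_derivative
     (- sin \<theta> * d\<theta> * LSu n q p m + cos \<theta> * dUf n q p dq dp m) + (cos \<theta> * d\<theta> * LSv n q p m + sin \<theta> * dVf n q p dq dp m)) (at 0)"
    unfolding f using DERIV_add[OF DERIV_mult[OF D_cos[OF T] U] DERIV_mult[OF D_sin[OF T] V]]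
    by (simp add: \<theta>_def d\<theta>_def algebra_simps)
  have wp: "sqrt (- 2 * kepH n q p) \<noteq> 0" using assms(2) by simp
  show "((\<lambda>t. snd (LSmap n (path q dq t) (path p dp t)) m) has_real_derivative
     (((- cos \<theta> * d\<theta> * LSu n q p m - sin \<theta> * dUf n q p dq dp m) + (- sin \<theta> * d\<theta> * LSv n q p m + cos \<theta> * dVf n q p dq dp m))
        * sqrt (- 2 * kepH n q p) - (- sin \<theta> * LSu n q p m + cos \<theta> * LSv n q p m) * dwf n q p dq dp)
      / (sqrt (- 2 * kepH n q p) * sqrt (- 2 * kepH n q p))) (at 0)"
    unfolding g using DERIV_divide[OF DERIV_add[OF DERIV_mult[OF DERIV_minus[OF D_sin[OF T]] U] DERIV_mult[OF D_cos[OF T] V]] W] wp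
    by (simp add: \<theta>_def d\<theta>_def dwf_def dQf_def algebra_simps)
qed

lemma pd_M:
  shows "pd2 (Mfun i j) m r s = r i * ek j m - r j * ek i m"
    and "pd1 (Mfun i j) m r s = ek i m * s j - ek j m * s i"
proof -
  have "((\<lambda>t. Mfun i j (path r (\<lambda>_. 0) t) (path s (ek m) t)) has_real_derivative r i * ek m j - r j * ek m i) (at 0)"
    unfolding Mfun_def path_def by (auto intro!: derivative_eq_intros)
  then show "pd2 (Mfun i j) m r s = r i * ek j m - r j * ek i m"
    unfolding pd2_eq by (simp add: DERIV_imp_deriv ek_sym)
  have "((\<lambda>t. Mfun i j (path r (ek m) t) (path s (\<lambda>_. 0) t)) has_real_derivative ek m i * s j - ek m j * s i) (at 0)"
    unfolding Mfun_def path_def by (auto intro!: derivative_eq_intros)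
  then show "pd1 (Mfun i j) m r s = ek i m * s j - ek j m * s i"
    unfolding pd1_eq by (simp add: DERIV_imp_deriv ek_sym)
qed

lemma neg_GQF: "- GQF n q p c a k = GQF n q p (- c) a k"
  unfolding GQF_def vc_app by (simp add: algebra_simps diff_divide_distrib add_divide_distrib)

lemma neg_GQL: "- GQL q p a b k = vc 0 0 (- p b) a (p a) b q p k"
  unfolding GQL_def vc_app by (simp add: algebra_simps)

lemma Hyp_all:
  assumes "dotp n q q > 0" "kepH n q p < 0" "i \<in> {1..n+1}" "j \<in> {1..n+1}"
    and dq: "\<And>k. k \<in> {1..n} \<Longrightarrow> dq k = GP n q p i j k"
    and dp: "\<And>k. k \<in> {1..n} \<Longrightarrow> dp k = - GQ n q p i j k"
  shows "dwf n q p dq dp = 0 \<and> (\<forall>m\<in>{1..n+1}.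
     dUf n q p dq dp m = LSu n q p i * ek j m - LSu n q p j * ek i m - dVf n q p dq dp (n+1) * LSv n q p m
   \<and> dVf n q p dq dp m = LSv n q p i * ek j m - LSv n q p j * ek i m + dVf n q p dq dp (n+1) * LSu n q p m)"
proof -
  consider "i \<in> {1..n}" "j \<in> {1..n}" | "i \<in> {1..n}" "j = n + 1" | "i = n + 1" "j \<in> {1..n}" | "i = n + 1" "j = n + 1"
    using assms(3,4) by fastforce
  then show ?thesis
  proof cases
    case 1
    have a: "dq k = vc 0 0 (q i) j (- q j) i q p k" "dp k = vc 0 0 (- p j) i (p i) j q p k" if "k \<in> {1..n}" for k
      using dq[OF that] dp[OF that] 1 by (simp_all add: GP_def GQ_def GPL_def neg_GQL)
    show ?thesis using HL[OF assms(1,2) 1 a] by blast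
  next
    case 2
    have a: "dq k = GPF n q p 1 i k" "dp k = GQF n q p (-1) i k" if "k \<in> {1..n}" for k
      using dq[OF that] dp[OF that] 2 by (simp_all add: GP_def GQ_def neg_GQF)
    have H1: "dwf n q p dq dp = 0" by (rule HF(1)[OF assms(1,2) 2(1)]) (fact a)+
    have H2: "dUf n q p dq dp m = 1 * (LSu n q p i * ek (n+1) m - LSu n q p (n+1) * ek i m) - dVf n q p dq dp (n+1) * LSv n q p m"
      if "m \<in> {1..n+1}" for m by (rule HF(2)[OF assms(1,2) 2(1)]) (fact a that)+
    have H3: "dVf n q p dq dp m = 1 * (LSv n q p i * ek (n+1) m - LSv n q p (n+1) * ek i m) + dVf n q p dq dp (n+1) * LSu n q p m"
      if "m \<in> {1..n+1}" for m by (rule HF(3)[OF assms(1,2) 2(1)]) (fact a that)+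
    show ?thesis
    proof (intro conjI ballI)
      show "dwf n q p dq dp = 0" by (rule H1)
      fix m assume m: "m \<in> {1..n+1}"
      show "dUf n q p dq dp m = LSu n q p i * ek j m - LSu n q p j * ek i m - dVf n q p dq dp (n + 1) * LSv n q p m"
        using H2[OF m] 2(2) by simp
      show "dVf n q p dq dp m = LSv n q p i * ek j m - LSv n q p j * ek i m + dVf n q p dq dp (n + 1) * LSu n q p m"
        using H3[OF m] 2(2) by simp
    qed
  next
    case 3
    have a: "dq k = GPF n q p (-1) j k" "dp k = GQF n q p (- (-1)) j k" if "k \<in> {1..n}" for k
      using dq[OF that] dp[OF that] 3 by (simp_all add: GP_def GQ_def neg_GQF)
    have H1: "dwf n q p dq dp = 0" by (rule HF(1)[OF assms(1,2) 3(2)]) (fact a)+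
    have H2: "dUf n q p dq dp m = (-1) * (LSu n q p j * ek (n+1) m - LSu n q p (n+1) * ek j m) - dVf n q p dq dp (n+1) * LSv n q p m"
      if "m \<in> {1..n+1}" for m by (rule HF(2)[OF assms(1,2) 3(2)]) (fact a that)+
    have H3: "dVf n q p dq dp m = (-1) * (LSv n q p j * ek (n+1) m - LSv n q p (n+1) * ek j m) + dVf n q p dq dp (n+1) * LSu n q p m"
      if "m \<in> {1..n+1}" for m by (rule HF(3)[OF assms(1,2) 3(2)]) (fact a that)+
    show ?thesis
    proof (intro conjI ballI)
      show "dwf n q p dq dp = 0" by (rule H1)
      fix m assume m: "m \<in> {1..n+1}"
      show "dUf n q p dq dp m = LSu n q p i * ek j m - LSu n q p j * ek i m - dVf n q p dq dp (n + 1) * LSv n q p m"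
        using H2[OF m] 3(1) by (simp add: algebra_simps)
      show "dVf n q p dq dp m = LSv n q p i * ek j m - LSv n q p j * ek i m + dVf n q p dq dp (n + 1) * LSu n q p m"
        using H3[OF m] 3(1) by (simp add: algebra_simps)
    qed
  next
    case 4
    have a: "dq k = 0" "dp k = 0" if "k \<in> {1..n}" for k
      using dq[OF that] dp[OF that] 4 by (simp_all add: GP_def GQ_def)
    have z: "dotp n q dq = 0" "dotp n p dp = 0" "dotp n dq p = 0" "dotp n q dp = 0"
      by (simp_all add: dotp_def a)
    have dw: "dwf n q p dq dp = 0" unfolding dwf_def dQf_def z by simp
    have dt: "dVf n q p dq dp (n+1) = 0" unfolding dVf_def dw ddf_def z by simp
    have "dUf n q p dq dp m = 0 \<and> dVf n q p dq dp m = 0" if "m \<in> {1..n+1}" for m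
      unfolding dUf_def dVf_def dw ddf_def dQf_def z using a by auto
    then show ?thesis using dw dt 4 by simp
  qed
qed

lemma Pm_dot: assumes "(q, p) \<in> Pminus n" shows "dotp n q q > 0" "kepH n q p < 0"
proof -
  from assms obtain k where k: "k \<in> {1..n}" "q k \<noteq> 0" and h: "kepH n q p < 0" unfolding Pminus_def by auto
  have "q k * q k \<le> dotp n q q" unfolding dotp_def
    by (rule member_le_sum[of k "{1..n}" "\<lambda>k. q k * q k"]) (use k in auto)
  moreover have "q k * q k > 0" using k(2) by (auto simp: zero_less_mult_iff linorder_neq_iff)
  ultimately show "dotp n q q > 0" by linarith
  show "kepH n q p < 0" by (rule h)
qed

lemma LS_fst: "fst (LSmap n q p) k = cos (LSv n q p (n+1)) * LSu n q p k + sin (LSv n q p (n+1)) * LSv n q p k"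
  unfolding LSmap_def Let_def by simp
lemma LS_snd: "snd (LSmap n q p) k = (- sin (LSv n q p (n+1)) * LSu n q p k + cos (LSv n q p (n+1)) * LSv n q p k) / sqrt (- 2 * kepH n q p)"
  unfolding LSmap_def Let_def by simp

lemma part5:
  assumes "(q, p) \<in> Pminus n" "i \<in> {1..n+1}" "j \<in> {1..n+1}" "m \<in> {1..n+1}"
  shows "(let X = hamvf n (Lfun n i j) q p;
             Y = hamvf (n + 1) (Mfun i j) (fst (LSmap n q p)) (snd (LSmap n q p)) in
         ((\<lambda>t. fst (LSmap n (\<lambda>a. q a + t * fst X a) (\<lambda>a. p a + t * snd X a)) m)
              has_real_derivative fst Y m) (at 0)
         \<and> ((\<lambda>t. snd (LSmap n (\<lambda>a. q a + t * fst X a) (\<lambda>a. p a + t * snd X a)) m)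
              has_real_derivative snd Y m) (at 0))"
proof -
  note pm = Pm_dot[OF assms(1)]
  define dq where "dq = fst (hamvf n (Lfun n i j) q p)"
  define dp where "dp = snd (hamvf n (Lfun n i j) q p)"
  have dqk: "dq k = GP n q p i j k" and dpk: "dp k = - GQ n q p i j k" if "k \<in> {1..n}" for k
    using that pd_L[OF pm assms(2,3) that] unfolding dq_def dp_def hamvf_def by simp_all
  have Hy: "dwf n q p dq dp = 0 \<and> (\<forall>m\<in>{1..n+1}.
     dUf n q p dq dp m = LSu n q p i * ek j m - LSu n q p j * ek i m - dVf n q p dq dp (n+1) * LSv n q p m
   \<and> dVf n q p dq dp m = LSv n q p i * ek j m - LSv n q p j * ek i m + dVf n q p dq dp (n+1) * LSu n q p m)"
    by (rule Hyp_all[OF pm assms(2,3)]) (fact dqk dpk)+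
  have dw: "dwf n q p dq dp = 0" using Hy by (rule conjunct1)
  have Hm: "dUf n q p dq dp m = LSu n q p i * ek j m - LSu n q p j * ek i m - dVf n q p dq dp (n+1) * LSv n q p m
   \<and> dVf n q p dq dp m = LSv n q p i * ek j m - LSv n q p j * ek i m + dVf n q p dq dp (n+1) * LSu n q p m"
    using bspec[OF conjunct2[OF Hy] assms(4)] .
  have
    dU: "dUf n q p dq dp m = LSu n q p i * ek j m - LSu n q p j * ek i m - dVf n q p dq dp (n+1) * LSv n q p m"
    and dV: "dVf n q p dq dp m = LSv n q p i * ek j m - LSv n q p j * ek i m + dVf n q p dq dp (n+1) * LSu n q p m"
    using Hm by simp_all
  have pth: "(\<lambda>a. q a + t * dq a) = path q dq t" "(\<lambda>a. p a + t * dp a) = path p dp t" for t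
    by (simp_all add: path_def)
  have Y1: "fst (hamvf (n + 1) (Mfun i j) (fst (LSmap n q p)) (snd (LSmap n q p))) m
      = fst (LSmap n q p) i * ek j m - fst (LSmap n q p) j * ek i m"
    using assms(4) by (simp add: hamvf_def pd_M)
  have Y2: "snd (hamvf (n + 1) (Mfun i j) (fst (LSmap n q p)) (snd (LSmap n q p))) m
      = - (ek i m * snd (LSmap n q p) j - ek j m * snd (LSmap n q p) i)"
    using assms(4) by (simp add: hamvf_def pd_M)
  have wp: "sqrt (- 2 * kepH n q p) > 0" using pm by simp
  show ?thesis
    unfolding Let_def dq_def[symmetric] dp_def[symmetric] pth Y1 Y2
  proof
    show "((\<lambda>t. fst (LSmap n (path q dq t) (path p dp t)) m) has_real_derivative
        fst (LSmap n q p) i * ek j m - fst (LSmap n q p) j * ek i m) (at 0)"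
      by (rule DERIV_cong[OF D_LS(1)[OF pm]]) (simp add: dU dV LS_fst algebra_simps)
    show "((\<lambda>t. snd (LSmap n (path q dq t) (path p dp t)) m) has_real_derivative
        - (ek i m * snd (LSmap n q p) j - ek j m * snd (LSmap n q p) i)) (at 0)"
      apply (rule DERIV_cong[OF D_LS(2)[OF pm]])
      apply (simp only: dU dV dw LS_snd)
      using wp by (simp add: field_simps)
  qed
qed

lemma M_UV:
  assumes "kepH n q p < 0"
  shows "Mfun i j (fst (LSmap n q p)) (snd (LSmap n q p)) =
    (LSu n q p i * LSv n q p j - LSu n q p j * LSv n q p i) / wsq n q p"
proof -
  have w: "wsq n q p > 0" using assms by (simp add: wsq_def)
  define c where "c = cos (LSv n q p (n+1))"
  define s where "s = sin (LSv n q p (n+1))"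
  have sc: "s ^ 2 + c ^ 2 = 1" unfolding s_def c_def by simp
  have e1: "Mfun i j (fst (LSmap n q p)) (snd (LSmap n q p)) =
     ((c * LSu n q p i + s * LSv n q p i) * (- s * LSu n q p j + c * LSv n q p j)
      - (c * LSu n q p j + s * LSv n q p j) * (- s * LSu n q p i + c * LSv n q p i)) / wsq n q p"
    unfolding Mfun_def LS_fst LS_snd wsq_def[symmetric] c_def[symmetric] s_def[symmetric]
    using w by (simp add: field_simps)
  have e2: "(c * LSu n q p i + s * LSv n q p i) * (- s * LSu n q p j + c * LSv n q p j)
      - (c * LSu n q p j + s * LSv n q p j) * (- s * LSu n q p i + c * LSv n q p i)
      = LSu n q p i * LSv n q p j - LSu n q p j * LSv n q p i"
    using sc by algebra
  show ?thesis unfolding e1 e2 ..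
qed

lemma part2:
  assumes "(q, p) \<in> Pminus n" "i \<in> {1..n+1}" "j \<in> {1..n+1}"
  shows "Mfun i j (fst (LSmap n q p)) (snd (LSmap n q p)) = Lfun n i j q p"
proof -
  note pm = Pm_dot[OF assms(1)]
  have v: "vnorm n q > 0" using vn_pos pm by blast
  have w: "wsq n q p > 0" using pm by (simp add: wsq_def)
  note sub = dotp_pp[OF pm] lenz_alt[OF pm]
  consider "i \<in> {1..n}" "j \<in> {1..n}" | "i \<in> {1..n}" "j = n + 1" | "i = n + 1" "j \<in> {1..n}" | "i = n + 1" "j = n + 1"
    using assms(2,3) by fastforce
  then show ?thesis
  proof cases
    case 1
    then show ?thesis unfolding M_UV[OF pm(2)] Lfun_def LSu_def LSv_def wsq_def[symmetric] using v w
      by (simp add: field_simps)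
  next
    case 2
    have e: "(i \<in> {1..n}) = True" "(n + 1 \<in> {1..n}) = False" "(n + 1 = n + 1) = True" "(i = n + 1) = False"
      using 2(1) by auto
    show ?thesis unfolding M_UV[OF pm(2)] Lfun_def LSu_def LSv_def wsq_def[symmetric] 2(2)
      using v w
      apply (simp only: e if_True if_False simp_thms)
      apply (simp only: sub)
      apply (simp only: divide_inverse inverse_mult_distrib power_inverse[symmetric] inverse_minus_eq)
      apply (subgoal_tac "vnorm n q * inverse (vnorm n q) = 1" "wsq n q p * inverse (wsq n q p) = 1")
        apply algebra
       apply simp_all
      done
  next
    case 3
    have e: "(j \<in> {1..n}) = True" "(n + 1 \<in> {1..n}) = False" "(n + 1 = n + 1) = True" "(j = n + 1) = False"
      using 3(2) by auto
    show ?thesis unfolding M_UV[OF pm(2)] Lfun_def LSu_def LSv_def wsq_def[symmetric] 3(1)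
      using v w
      apply (simp only: e if_True if_False simp_thms)
      apply (simp only: sub)
      apply (simp only: divide_inverse inverse_mult_distrib power_inverse[symmetric] inverse_minus_eq)
      apply (subgoal_tac "vnorm n q * inverse (vnorm n q) = 1" "wsq n q p * inverse (wsq n q p) = 1")
        apply algebra
       apply simp_all
      done
  next
    case 4
    then show ?thesis unfolding M_UV[OF pm(2)] Lfun_def by simp
  qed
qed

lemma dotp_Suc: "dotp (n+1) x y = dotp n x y + x (n+1) * y (n+1)"
  unfolding dotp_def by simp

lemma part1:
  assumes "(q, p) \<in> Pminus n"
  shows "LSmap n q p \<in> Tminus n"
proof -
  note pm = Pm_dot[OF assms(1)]
  have v: "vnorm n q > 0" using vn_pos pm by blast
  have w: "wsq n q p > 0" using pm by (simp add: wsq_def)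
  from assms obtain k0 where "k0 \<in> {1..n}" unfolding Pminus_def by auto
  then have one: "(1::nat) \<in> {1..n}" by auto
  define c where "c = cos (LSv n q p (n+1))"
  define s where "s = sin (LSv n q p (n+1))"
  define Q where "Q = vnorm n q"
  define W where "W = wsq n q p"
  define d where "d = dotp n q p"
  have sc: "s ^ 2 + c ^ 2 = 1" unfolding s_def c_def by simp
  define r where "r = fst (LSmap n q p)"
  define z where "z = snd (LSmap n q p)"
  have rk: "r k = vc (- s / Q) (c * W * Q + s * d) 0 1 0 1 q p k" if "k \<in> {1..n}" for k
    using that unfolding r_def LS_fst vc_app c_def[symmetric] s_def[symmetric] unfolding LSu_def LSv_def wsq_def[symmetric] Q_def[symmetric] W_def[symmetric] d_def[symmetric]
    by (simp add: ek_def algebra_simps)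
  have zk: "z k = vc (- c / Q / W) ((- s * W * Q + c * d) / W) 0 1 0 1 q p k" if "k \<in> {1..n}" for k
    using that w unfolding z_def LS_snd vc_app c_def[symmetric] s_def[symmetric] unfolding LSu_def LSv_def wsq_def[symmetric] Q_def[symmetric] W_def[symmetric] d_def[symmetric]
    by (simp add: ek_def field_simps)
  have rN: "r (n+1) = c * (Q * dotp n p p - 1) + s * (- W * d)"
    unfolding r_def LS_fst c_def[symmetric] s_def[symmetric] unfolding LSu_def LSv_def wsq_def[symmetric] Q_def[symmetric] W_def[symmetric] d_def[symmetric]
    by simp
  have zN: "z (n+1) = (- s * (Q * dotp n p p - 1) + c * (- W * d)) / W"
    unfolding z_def LS_snd c_def[symmetric] s_def[symmetric] unfolding LSu_def LSv_def wsq_def[symmetric] Q_def[symmetric] W_def[symmetric] d_def[symmetric]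
    by simp
  have dd: "dotp n x y = (\<Sum>k=1..n. vc a1 b1 0 1 0 1 q p k * vc a2 b2 0 1 0 1 q p k)"
    if "\<forall>k\<in>{1..n}. x k = vc a1 b1 0 1 0 1 q p k" "\<forall>k\<in>{1..n}. y k = vc a2 b2 0 1 0 1 q p k" for x y a1 b1 a2 b2
    unfolding dotp_def by (rule sum.cong) (simp_all add: that)
  note sub = dotp_qq[of n q] dotp_pp[OF pm] dotp_comm[of n p q]
  have rk': "\<forall>k\<in>{1..n}. r k = vc (- s / Q) (c * W * Q + s * d) 0 1 0 1 q p k" using rk by blast
  have zk': "\<forall>k\<in>{1..n}. z k = vc (- c / Q / W) ((- s * W * Q + c * d) / W) 0 1 0 1 q p k" using zk by blast
  have Qp: "Q > 0" "W > 0" using v w by (simp_all add: Q_def W_def)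
  have rr: "dotp (n+1) r r = 1"
    unfolding dotp_Suc dd[OF rk' rk'] sum_vc[OF one one one one] rN
    using Qp sc unfolding sub Q_def[symmetric] W_def[symmetric] d_def[symmetric]
    apply (simp only: divide_inverse inverse_mult_distrib power_inverse[symmetric] inverse_minus_eq)
    apply (subgoal_tac "Q * inverse Q = 1" "W * inverse W = 1")
      apply algebra
     apply simp_all
    done
  have rz: "dotp (n+1) r z = 0"
    unfolding dotp_Suc dd[OF rk' zk'] sum_vc[OF one one one one] rN zN
    using Qp sc unfolding sub Q_def[symmetric] W_def[symmetric] d_def[symmetric]
    apply (simp only: divide_inverse inverse_mult_distrib power_inverse[symmetric] inverse_minus_eq)
    apply (subgoal_tac "Q * inverse Q = 1" "W * inverse W = 1")
      apply algebra
     apply simp_all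
    done
  have zz: "dotp (n+1) z z = 1 / W^2"
    unfolding dotp_Suc dd[OF zk' zk'] sum_vc[OF one one one one] zN
    using Qp sc unfolding sub Q_def[symmetric] W_def[symmetric] d_def[symmetric]
    apply (simp only: divide_inverse inverse_mult_distrib power_inverse[symmetric] inverse_minus_eq)
    apply (subgoal_tac "Q * inverse Q = 1" "W * inverse W = 1")
      apply algebra
     apply simp_all
    done
  have ex_z: "\<exists>k\<in>{1..n+1}. z k \<noteq> 0"
  proof (rule ccontr)
    assume "\<not> ?thesis"
    then have "dotp (n+1) z z = 0" unfolding dotp_def by simp
    then show False using zz Qp by simp
  qed
  have ex_r: "\<exists>k\<in>{1..n+1}. r k \<noteq> (if k = n + 1 then 1 else 0)"
  proof (rule ccontr)
    assume a: "\<not> ?thesis"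
    have r0: "r k = 0" if "k \<in> {1..n}" for k using a that by force
    have r1: "r (n+1) = 1" using a by force
    have "dotp (n+1) r z = z (n+1)" unfolding dotp_Suc dotp_def using r0 r1 by simp
    then have z0: "z (n+1) = 0" using rz by simp
    have Vid: "LSv n q p (n+1) = s * r (n+1) + c * W * z (n+1)"
      unfolding r_def z_def LS_fst LS_snd c_def[symmetric] s_def[symmetric] wsq_def[symmetric] W_def[symmetric]
      using Qp sc by (simp add: field_simps) algebra
    then have "sin (LSv n q p (n+1)) = LSv n q p (n+1)" using z0 r1 by (simp add: s_def)
    then have th: "LSv n q p (n+1) = 0" by (rule sin_eq_self)
    then have cs: "c = 1" "s = 0" by (simp_all add: c_def s_def)
    have pk: "p k = 0" if "k \<in> {1..n}" for k
    proof -
      have "r k = W * Q * p k" using that unfolding r_def LS_fst c_def[symmetric] s_def[symmetric] cs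
        unfolding LSu_def wsq_def[symmetric] W_def[symmetric] Q_def[symmetric] by simp
      then show ?thesis using r0[OF that] Qp by simp
    qed
    have "dotp n p p = 0" unfolding dotp_def using pk by simp
    then have "r (n+1) = -1" unfolding rN cs by simp
    then show False using r1 by simp
  qed
  have "LSmap n q p = (r, z)" by (simp add: r_def z_def)
  then show ?thesis unfolding Tminus_def mem_Collect_eq prod.case using rr rz ex_r ex_z by simp
qed

lemma Lfun_diag: "Lfun n a a q p = 0" unfolding Lfun_def by auto

lemma Lfun_anti: "Lfun n b a q p = - Lfun n a b q p" unfolding Lfun_def by auto

theorem theorem4p1:
  fixes n :: nat
  assumes "n \<ge> 1"
  shows
    "(\<forall>(q, p)\<in>Pminus n. LSmap n q p \<in> Tminus n)
   \<and> (\<forall>(q, p)\<in>Pminus n. \<forall>i\<in>{1..n+1}. \<forall>j\<in>{1..n+1}.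
        Mfun i j (fst (LSmap n q p)) (snd (LSmap n q p)) = Lfun n i j q p)
   \<and> (\<forall>(q, p)\<in>Pminus n. \<forall>i\<in>{1..n+1}. \<forall>j\<in>{1..n+1}. \<forall>k\<in>{1..n+1}.
        i \<noteq> j \<and> j \<noteq> k \<and> i \<noteq> k \<longrightarrow>
        poisson n (Lfun n i j) (Lfun n j k) q p = Lfun n k i q p)
   \<and> (\<forall>(q, p)\<in>Pminus n. \<forall>i\<in>{1..n+1}. \<forall>j\<in>{1..n+1}. \<forall>k\<in>{1..n+1}. \<forall>l\<in>{1..n+1}.
        card {i, j, k, l} \<noteq> 3 \<longrightarrow>
        poisson n (Lfun n i j) (Lfun n k l) q p = 0)
   \<and> (\<forall>(q, p)\<in>Pminus n. \<forall>i\<in>{1..n+1}. \<forall>j\<in>{1..n+1}. \<forall>m\<in>{1..n+1}.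
        (let X = hamvf n (Lfun n i j) q p;
             Y = hamvf (n + 1) (Mfun i j) (fst (LSmap n q p)) (snd (LSmap n q p)) in
         ((\<lambda>t. fst (LSmap n (\<lambda>a. q a + t * fst X a) (\<lambda>a. p a + t * snd X a)) m)
              has_real_derivative fst Y m) (at 0)
         \<and> ((\<lambda>t. snd (LSmap n (\<lambda>a. q a + t * fst X a) (\<lambda>a. p a + t * snd X a)) m)
              has_real_derivative snd Y m) (at 0)))"
proof (intro conjI)
  show "\<forall>(q, p)\<in>Pminus n. LSmap n q p \<in> Tminus n" using part1 by blast
  show "\<forall>(q, p)\<in>Pminus n. \<forall>i\<in>{1..n+1}. \<forall>j\<in>{1..n+1}.
        Mfun i j (fst (LSmap n q p)) (snd (LSmap n q p)) = Lfun n i j q p" using part2 by blast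
  show "\<forall>(q, p)\<in>Pminus n. \<forall>i\<in>{1..n+1}. \<forall>j\<in>{1..n+1}. \<forall>k\<in>{1..n+1}.
        i \<noteq> j \<and> j \<noteq> k \<and> i \<noteq> k \<longrightarrow>
        poisson n (Lfun n i j) (Lfun n j k) q p = Lfun n k i q p"
  proof (intro ballI impI, clarify)
    fix q p i j k assume qp: "(q, p) \<in> Pminus n" and ijk: "i \<in> {1..n+1}" "j \<in> {1..n+1}" "k \<in> {1..n+1}"
      and ne: "i \<noteq> j" "j \<noteq> k" "i \<noteq> k"
    show "poisson n (Lfun n i j) (Lfun n j k) q p = Lfun n k i q p"
      using bracket_gen[OF Pm_dot[OF qp] ijk(1,2,2,3)] ne Lfun_anti[of n k i q p]
      by (simp add: ek_def Lfun_diag)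
  qed
  show "\<forall>(q, p)\<in>Pminus n. \<forall>i\<in>{1..n+1}. \<forall>j\<in>{1..n+1}. \<forall>k\<in>{1..n+1}. \<forall>l\<in>{1..n+1}.
        card {i, j, k, l} \<noteq> 3 \<longrightarrow>
        poisson n (Lfun n i j) (Lfun n k l) q p = 0"
  proof (intro ballI impI, clarify)
    fix q p i j k l assume qp: "(q, p) \<in> Pminus n" and ijk: "i \<in> {1..n+1}" "j \<in> {1..n+1}" "k \<in> {1..n+1}" "l \<in> {1..n+1}"
      and c: "card {i, j, k, l} \<noteq> 3"
    show "poisson n (Lfun n i j) (Lfun n k l) q p = 0"
      unfolding bracket_gen[OF Pm_dot[OF qp] ijk]
      using c by (cases "i = j"; cases "i = k"; cases "i = l"; cases "j = k"; cases "j = l"; cases "k = l")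
        (simp_all add: ek_def Lfun_diag card_insert_if)
  qed
  show "\<forall>(q, p)\<in>Pminus n. \<forall>i\<in>{1..n+1}. \<forall>j\<in>{1..n+1}. \<forall>m\<in>{1..n+1}.
        (let X = hamvf n (Lfun n i j) q p;
             Y = hamvf (n + 1) (Mfun i j) (fst (LSmap n q p)) (snd (LSmap n q p)) in
         ((\<lambda>t. fst (LSmap n (\<lambda>a. q a + t * fst X a) (\<lambda>a. p a + t * snd X a)) m)
              has_real_derivative fst Y m) (at 0)
         \<and> ((\<lambda>t. snd (LSmap n (\<lambda>a. q a + t * fst X a) (\<lambda>a. p a + t * snd X a)) m)
              has_real_derivative snd Y m) (at 0))"
    using part5 by blast
qed


end
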